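(* Let $P>0$ and let $H_1\ge H_2\ge 0$ with $H_1>0$. For $\alpha\in[0,1]$ put $$r_1(\alpha)=\log_2(1+\alpha P H_1),\qquad r_2(\alpha)=\log_2\Big(1+\frac{PH_2(1-\alpha)}{\alpha H_2 P+1}\Big).$$ Then the maximum of $\min\{r_1(\alpha),r_2(\alpha)\}$ over $\alpha\in[0,1]$ is attained at $$\alpha^{\star}=\frac{2H_2}{\sqrt{(H_1+H_2)^2+4H_1H_2^2P}+(H_1+H_2)}.$$
   Context: Two-user downlink NOMA: a base station with total transmit power $P$ sends the superposition $\sqrt{\alpha P}s_1+\sqrt{(1-\alpha)P}s_2$, $H_i=|h_i|^2$ is the channel gain to Receiver $i$, and the noise has unit variance. When $H_1\ge H_2$, Receiver 2 decodes $s_2$ treating $s_1$ as noise (rate $r_2(\alpha)$), and Receiver 1 removes $s_2$ by successive interference cancellation and then decodes $s_1$ (rate $r_1(\alpha)$). *)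

theory Defs
  imports Complex_Main
begin

definition noma_r1 :: "real \<Rightarrow> real \<Rightarrow> real \<Rightarrow> real" where
  "noma_r1 P H1 \<alpha> = log 2 (1 + \<alpha> * P * H1)"

definition noma_r2 :: "real \<Rightarrow> real \<Rightarrow> real \<Rightarrow> real" where
  "noma_r2 P H2 \<alpha> = log 2 (1 + P * H2 * (1 - \<alpha>) / (\<alpha> * H2 * P + 1))"

definition noma_alpha_star :: "real \<Rightarrow> real \<Rightarrow> real \<Rightarrow> real" where
  "noma_alpha_star P H1 H2 =
     2 * H2 / (sqrt ((H1 + H2)^2 + 4 * H1 * H2^2 * P) + (H1 + H2))"

end

theory Submission
  imports Defs
begin

theorem theorem1:
  fixes P H1 H2 :: real
  assumes "P > 0" and "H1 \<ge> H2" and "H2 \<ge> 0" and "H1 > 0"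
  shows "noma_alpha_star P H1 H2 \<in> {0..1} \<and>
         (\<forall>\<alpha>\<in>{0..1}. min (noma_r1 P H1 \<alpha>) (noma_r2 P H2 \<alpha>)
            \<le> min (noma_r1 P H1 (noma_alpha_star P H1 H2)) (noma_r2 P H2 (noma_alpha_star P H1 H2)))"
proof -
  define S where "S = H1 + H2"
  define s where "s = sqrt ((H1 + H2)^2 + 4 * H1 * H2^2 * P)"
  define a where "a = noma_alpha_star P H1 H2"
  have S0: "S > 0" using assms unfolding S_def by simp
  have s2: "s^2 = S^2 + 4 * H1 * H2^2 * P" unfolding s_def S_def
    using assms by (simp add: zero_le_mult_iff)
  have sS: "s \<ge> S" unfolding s_def S_def
    by (rule real_le_rsqrt) (use assms in \<open>simp add: zero_le_mult_iff\<close>)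
  have a_def': "a = 2 * H2 / (s + S)" unfolding a_def noma_alpha_star_def s_def S_def by simp
  have pos: "s + S > 0" using sS S0 by simp
  have aeq: "a * (s + S) = 2 * H2" using pos a_def' by simp
  have a0: "a \<ge> 0" using a_def' pos assms by simp
  have a1: "a \<le> 1" using a_def' pos assms sS S_def by (simp add: divide_le_eq)
  have quad: "P * H1 * H2 * a^2 + S * a - H2 = 0"
  proof -
    have "(P * H1 * H2 * a^2 + S * a - H2) * (s + S)^2
        = P * H1 * H2 * (a * (s+S))^2 + S * (a * (s+S)) * (s + S) - H2 * (s+S)^2"
      by (simp add: algebra_simps power2_eq_square)
    also have "\<dots> = H2 * (4 * P * H1 * H2^2 + S^2 - s^2)"
      unfolding aeq by (simp add: algebra_simps power2_eq_square)
    also have "\<dots> = 0" using s2 by simp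
    finally show ?thesis using pos by simp
  qed
  have ident: "(1 + a * P * H1) * (a * H2 * P + 1) = 1 + H2 * P"
  proof -
    have "P * (P * H1 * H2 * a^2 + S * a - H2) = 0" using quad by simp
    thus ?thesis unfolding S_def by (simp add: algebra_simps power2_eq_square)
  qed
  have r2eq: "\<And>x. x \<ge> 0 \<Longrightarrow> noma_r2 P H2 x = log 2 ((1 + H2 * P) / (x * H2 * P + 1))"
  proof -
    fix x :: real assume "x \<ge> 0"
    hence d: "x * H2 * P + 1 > 0" using assms by (smt (verit) mult_nonneg_nonneg)
    have "1 + P * H2 * (1 - x) / (x * H2 * P + 1) = (1 + H2 * P) / (x * H2 * P + 1)"
      using d by (simp add: field_simps)
    thus "noma_r2 P H2 x = log 2 ((1 + H2 * P) / (x * H2 * P + 1))"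
      unfolding noma_r2_def by simp
  qed
  have da: "a * H2 * P + 1 > 0" using a0 assms by (smt (verit) mult_nonneg_nonneg)
  have eq: "noma_r1 P H1 a = noma_r2 P H2 a"
  proof -
    have "(1 + H2 * P) / (a * H2 * P + 1) = 1 + a * P * H1"
      using ident da by (simp add: divide_eq_eq)
    thus ?thesis unfolding r2eq[OF a0] noma_r1_def by simp
  qed
  have r1mono: "\<And>x. 0 \<le> x \<Longrightarrow> x \<le> a \<Longrightarrow> noma_r1 P H1 x \<le> noma_r1 P H1 a"
  proof -
    fix x :: real assume x: "0 \<le> x" "x \<le> a"
    have "x * P * H1 \<le> a * P * H1" using x assms by (simp add: mult_right_mono)
    moreover have "0 < 1 + x * P * H1" using x assms by (smt (verit) mult_nonneg_nonneg)
    ultimately show "noma_r1 P H1 x \<le> noma_r1 P H1 a" unfolding noma_r1_def by simp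
  qed
  have r2mono: "\<And>x. a \<le> x \<Longrightarrow> noma_r2 P H2 x \<le> noma_r2 P H2 a"
  proof -
    fix x :: real assume x: "a \<le> x"
    have x0: "x \<ge> 0" using x a0 by simp
    have dx: "x * H2 * P + 1 > 0" using x0 assms by (smt (verit) mult_nonneg_nonneg)
    have "a * H2 * P \<le> x * H2 * P" using x assms by (simp add: mult_right_mono)
    hence "(1 + H2 * P) / (x * H2 * P + 1) \<le> (1 + H2 * P) / (a * H2 * P + 1)"
      using da dx assms by (intro divide_left_mono; smt (verit) mult_nonneg_nonneg mult_pos_pos)
    moreover have "0 < (1 + H2 * P) / (x * H2 * P + 1)" using dx assms by (smt (verit) mult_nonneg_nonneg divide_pos_pos)
    ultimately show "noma_r2 P H2 x \<le> noma_r2 P H2 a" unfolding r2eq[OF x0] r2eq[OF a0] by simp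
  qed
  show ?thesis
  proof (intro conjI ballI)
    show "noma_alpha_star P H1 H2 \<in> {0..1}" using a0 a1 a_def by simp
  next
    fix x :: real assume "x \<in> {0..1}"
    hence x0: "0 \<le> x" by simp
    show "min (noma_r1 P H1 x) (noma_r2 P H2 x) \<le> min (noma_r1 P H1 (noma_alpha_star P H1 H2)) (noma_r2 P H2 (noma_alpha_star P H1 H2))"
    proof (cases "x \<le> a")
      case True thus ?thesis using r1mono[OF x0 True] eq a_def by simp
    next
      case False thus ?thesis using r2mono[of x] eq a_def by simp
    qed
  qed
qed

end
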